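(* Let $\mathcal{G}$ be a finite simple undirected graph with vertex set $\mathcal{N}=\{1,2,\ldots,N\}$, $N\ge 1$, and let $\boldsymbol{\mathcal{A}}$ denote the collection of all independent sets of vertices of $\mathcal{G}$ (including the empty set $\Phi$). For $i\in\mathcal{N}$ let $\mathcal{N}_i$ be the set of neighbours of $i$ in $\mathcal{G}$. For each $\mathcal{A}\in\boldsymbol{\mathcal{A}}$ let $\mathcal{B}_{\mathcal{A}}=\{j\in\mathcal{N}\setminus\mathcal{A} : \mathcal{N}_j\cap\mathcal{A}\neq\emptyset\}$ and $\mathcal{U}_{\mathcal{A}}=\mathcal{N}\setminus(\mathcal{A}\cup\mathcal{B}_{\mathcal{A}})$. Given parameters $\rho_i>0$, $i\in\mathcal{N}$, define the probability distribution on $\boldsymbol{\mathcal{A}}$ $$\pi(\mathcal{A})=\frac{\prod_{i\in\mathcal{A}}\rho_i}{\sum_{\mathcal{A}'\in\boldsymbol{\mathcal{A}}}\prod_{j\in\mathcal{A}'}\rho_j}$$ (an empty product equals $1$), and for each $i\in\mathcal{N}$ let $$x_i(\mathcal{G})=\sum_{\mathcal{A}\in\boldsymbol{\mathcal{A}}\,:\, i\in\mathcal{A}\cup\mathcal{U}_{\mathcal{A}}}\pi(\mathcal{A}),\qquad \bar{\Theta}(\mathcal{G})=\sum_{i=1}^N x_i(\mathcal{G}).$$ Let $\alpha(\mathcal{G})$ be the independence number of $\mathcal{G}$ (the cardinality of a maximum independent set). Then, taking $\rho_i=\rho$ for all $i\in\mathcal{N}$ and letting $\rho\to\infty$, we have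 $\bar{\Theta}(\mathcal{G})\to\alpha(\mathcal{G})$.
   Context: In the paper's model, vertices of $\mathcal{G}$ are co-channel WLAN cells, edges join cells that mutually block each other by carrier sensing, $\pi$ is the stationary distribution of the set of cells transmitting, $\rho_i$ is the "access intensity" of cell $i$, $x_i(\mathcal{G})$ is the fraction of time cell $i$ is not blocked (its normalized throughput), and $\bar{\Theta}(\mathcal{G})$ is the normalized network throughput. A maximum independent set is an independent set of largest cardinality. *)

theory Defs
  imports Complex_Main
begin

definition simple_graph :: "nat \<Rightarrow> (nat \<Rightarrow> nat \<Rightarrow> bool) \<Rightarrow> bool" where
  "simple_graph N E \<longleftrightarrow> (\<forall>i j. E i j \<longrightarrow> i \<in> {1..N} \<and> j \<in> {1..N}) \<and>
     (\<forall>i j. E i j \<longrightarrow> E j i) \<and> (\<forall>i. \<not> E i i)"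

definition neighbours :: "nat \<Rightarrow> (nat \<Rightarrow> nat \<Rightarrow> bool) \<Rightarrow> nat \<Rightarrow> nat set" where
  "neighbours N E i = {j \<in> {1..N}. E i j}"

definition indep_set :: "nat \<Rightarrow> (nat \<Rightarrow> nat \<Rightarrow> bool) \<Rightarrow> nat set \<Rightarrow> bool" where
  "indep_set N E A \<longleftrightarrow> A \<subseteq> {1..N} \<and> (\<forall>i\<in>A. \<forall>j\<in>A. \<not> E i j)"

definition indep_sets :: "nat \<Rightarrow> (nat \<Rightarrow> nat \<Rightarrow> bool) \<Rightarrow> nat set set" where
  "indep_sets N E = {A. indep_set N E A}"

definition blocked :: "nat \<Rightarrow> (nat \<Rightarrow> nat \<Rightarrow> bool) \<Rightarrow> nat set \<Rightarrow> nat set" where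
  "blocked N E A = {j \<in> {1..N} - A. neighbours N E j \<inter> A \<noteq> {}}"

definition unblocked :: "nat \<Rightarrow> (nat \<Rightarrow> nat \<Rightarrow> bool) \<Rightarrow> nat set \<Rightarrow> nat set" where
  "unblocked N E A = {1..N} - (A \<union> blocked N E A)"

definition stat_dist :: "nat \<Rightarrow> (nat \<Rightarrow> nat \<Rightarrow> bool) \<Rightarrow> (nat \<Rightarrow> real) \<Rightarrow> nat set \<Rightarrow> real" where
  "stat_dist N E \<rho> A = (\<Prod>i\<in>A. \<rho> i) / (\<Sum>A'\<in>indep_sets N E. \<Prod>j\<in>A'. \<rho> j)"

definition norm_thr :: "nat \<Rightarrow> (nat \<Rightarrow> nat \<Rightarrow> bool) \<Rightarrow> (nat \<Rightarrow> real) \<Rightarrow> nat \<Rightarrow> real" where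
  "norm_thr N E \<rho> i = (\<Sum>A\<in>{A \<in> indep_sets N E. i \<in> A \<union> unblocked N E A}. stat_dist N E \<rho> A)"

definition net_thr :: "nat \<Rightarrow> (nat \<Rightarrow> nat \<Rightarrow> bool) \<Rightarrow> (nat \<Rightarrow> real) \<Rightarrow> real" where
  "net_thr N E \<rho> = (\<Sum>i=1..N. norm_thr N E \<rho> i)"

definition indep_number :: "nat \<Rightarrow> (nat \<Rightarrow> nat \<Rightarrow> bool) \<Rightarrow> nat" where
  "indep_number N E = Max (card ` indep_sets N E)"

end

theory Submission
  imports Defs
begin

lemma fin_S: "finite (indep_sets N E)"
proof -
  have "indep_sets N E \<subseteq> Pow {1..N}" by (auto simp: indep_sets_def indep_set_def)
  thus ?thesis by (rule finite_subset) simp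
qed

lemma empty_S: "{} \<in> indep_sets N E"
  by (simp add: indep_sets_def indep_set_def)

lemma X_sub: "A \<union> unblocked N E A \<subseteq> {1..N}" if "A \<in> indep_sets N E"
  using that by (auto simp: unblocked_def indep_sets_def indep_set_def)

lemma card_le: "A \<in> indep_sets N E \<Longrightarrow> card A \<le> indep_number N E"
  unfolding indep_number_def using fin_S by (intro Max_ge) auto

lemma max_unblocked:
  assumes g: "simple_graph N E" and A: "A \<in> indep_sets N E" and c: "card A = indep_number N E"
  shows "unblocked N E A = {}"
proof (rule ccontr)
  assume "unblocked N E A \<noteq> {}"
  then obtain j where j: "j \<in> unblocked N E A" by blast
  have jN: "j \<in> {1..N}" "j \<notin> A" and nb: "neighbours N E j \<inter> A = {}"
    using j by (auto simp: unblocked_def blocked_def)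
  have AN: "A \<subseteq> {1..N}" and ind: "\<forall>i\<in>A. \<forall>k\<in>A. \<not> E i k"
    using A by (auto simp: indep_sets_def indep_set_def)
  have nE: "\<And>k. k \<in> A \<Longrightarrow> \<not> E j k \<and> \<not> E k j"
    using nb AN g unfolding neighbours_def simple_graph_def by blast
  have irr: "\<not> E j j" using g unfolding simple_graph_def by blast
  have "insert j A \<in> indep_sets N E"
    using AN ind nE irr jN by (auto simp: indep_sets_def indep_set_def)
  hence "card (insert j A) \<le> indep_number N E" by (rule card_le)
  moreover have "finite A" using AN finite_subset by blast
  ultimately show False using jN c by simp
qed

lemma sd: "stat_dist N E (\<lambda>_. \<rho>) A = \<rho> ^ card A / (\<Sum>A\<in>indep_sets N E. \<rho> ^ card A)"
  unfolding stat_dist_def by simp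

lemma net_eq:
  "net_thr N E (\<lambda>_. \<rho>) = (\<Sum>A\<in>indep_sets N E. \<rho> ^ card A * real (card (A \<union> unblocked N E A)))
     / (\<Sum>A\<in>indep_sets N E. \<rho> ^ card A)"
proof -
  let ?S = "indep_sets N E"
  let ?X = "\<lambda>A. A \<union> unblocked N E A"
  let ?D = "\<Sum>A\<in>?S. \<rho> ^ card A"
  have pc: "(\<lambda>A::nat set. \<Prod>_\<in>A. \<rho>) = (\<lambda>A. \<rho> ^ card A)" by (simp add: fun_eq_iff)
  have "net_thr N E (\<lambda>_. \<rho>) = (\<Sum>i=1..N. \<Sum>A\<in>?S. if i \<in> ?X A then \<rho> ^ card A / ?D else 0)"
    unfolding net_thr_def norm_thr_def sd
    by (rule sum.cong[OF refl], subst sum.inter_filter[OF fin_S]) simp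
  also have "\<dots> = (\<Sum>A\<in>?S. \<Sum>i=1..N. if i \<in> ?X A then \<rho> ^ card A / ?D else 0)"
    by (rule sum.swap)
  also have "\<dots> = (\<Sum>A\<in>?S. real (card (?X A)) * (\<rho> ^ card A / ?D))"
  proof (intro sum.cong refl)
    fix A assume A: "A \<in> ?S"
    have "(\<Sum>i=1..N. if i \<in> ?X A then \<rho> ^ card A / ?D else 0)
        = (\<Sum>i\<in>{i\<in>{1..N}. i \<in> ?X A}. \<rho> ^ card A / ?D)"
      by (subst sum.inter_filter) auto
    also have "{i\<in>{1..N}. i \<in> ?X A} = ?X A" using X_sub[OF A] by auto
    finally show "(\<Sum>i=1..N. if i \<in> ?X A then \<rho> ^ card A / ?D else 0)
        = real (card (?X A)) * (\<rho> ^ card A / ?D)" by simp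
  qed
  also have "\<dots> = (\<Sum>A\<in>?S. \<rho> ^ card A * real (card (?X A))) / ?D"
    by (simp add: sum_divide_distrib mult_ac)
  finally show ?thesis .
qed

theorem theorem1:
  fixes N :: nat and E :: "nat \<Rightarrow> nat \<Rightarrow> bool"
  assumes "N \<ge> 1" and "simple_graph N E"
  shows "((\<lambda>\<rho>::real. net_thr N E (\<lambda>_. \<rho>)) \<longlongrightarrow> real (indep_number N E)) at_top"
proof -
  let ?S = "indep_sets N E"
  let ?X = "\<lambda>A. A \<union> unblocked N E A"
  define a where "a = indep_number N E"
  define h where "h = (\<lambda>A::nat set. if card A = a then 1 else (0::real))"
  define m where "m = (\<Sum>A\<in>?S. h A)"
  have lim1: "((\<lambda>\<rho>::real. \<rho> ^ card A / \<rho> ^ a) \<longlongrightarrow> h A) at_top" if A: "A \<in> ?S" for A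
  proof (cases "card A = a")
    case True
    have "eventually (\<lambda>\<rho>::real. \<rho> ^ card A / \<rho> ^ a = h A) at_top"
      using eventually_gt_at_top[of 0] by eventually_elim (simp add: True h_def)
    thus ?thesis by (rule tendsto_eventually)
  next
    case False
    with card_le[OF A] have lt: "card A < a" unfolding a_def by simp
    have "filterlim (\<lambda>\<rho>::real. \<rho> ^ (a - card A)) at_top at_top"
      using lt by (intro filterlim_pow_at_top filterlim_ident) auto
    hence "((\<lambda>\<rho>::real. inverse (\<rho> ^ (a - card A))) \<longlongrightarrow> 0) at_top"
      by (rule tendsto_inverse_0_at_top)
    moreover have "eventually (\<lambda>\<rho>::real. inverse (\<rho> ^ (a - card A)) = \<rho> ^ card A / \<rho> ^ a) at_top"
      using eventually_gt_at_top[of 0]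
    proof eventually_elim
      case (elim \<rho>)
      have "\<rho> ^ a = \<rho> ^ card A * \<rho> ^ (a - card A)"
        using lt by (simp add: power_add[symmetric])
      thus ?case using elim by (simp add: field_simps)
    qed
    ultimately show ?thesis using False by (simp add: h_def tendsto_cong)
  qed
  have num: "((\<lambda>\<rho>::real. \<Sum>A\<in>?S. \<rho> ^ card A / \<rho> ^ a * real (card (?X A)))
      \<longlongrightarrow> (\<Sum>A\<in>?S. h A * real (card (?X A)))) at_top"
    by (intro tendsto_sum tendsto_mult lim1 tendsto_const)
  have den: "((\<lambda>\<rho>::real. \<Sum>A\<in>?S. \<rho> ^ card A / \<rho> ^ a) \<longlongrightarrow> m) at_top"
    unfolding m_def by (intro tendsto_sum lim1)
  have numv: "(\<Sum>A\<in>?S. h A * real (card (?X A))) = real a * m"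
    unfolding m_def sum_distrib_left
  proof (intro sum.cong refl)
    fix A assume A: "A \<in> ?S"
    show "h A * real (card (?X A)) = real a * h A"
      using max_unblocked[OF assms(2) A] by (auto simp: h_def a_def)
  qed
  have "a \<in> card ` ?S" unfolding a_def indep_number_def
    using fin_S[of N E] empty_S[of N E] by (intro Max_in) auto
  then obtain A0 where A0: "A0 \<in> ?S" "card A0 = a" by auto
  have "m \<ge> h A0" unfolding m_def using fin_S A0
    by (intro member_le_sum) (auto simp: h_def)
  hence mpos: "m \<noteq> 0" using A0 by (simp add: h_def)
  have "((\<lambda>\<rho>::real. (\<Sum>A\<in>?S. \<rho> ^ card A / \<rho> ^ a * real (card (?X A)))
       / (\<Sum>A\<in>?S. \<rho> ^ card A / \<rho> ^ a)) \<longlongrightarrow> real a * m / m) at_top"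
    using tendsto_divide[OF num den mpos] numv by simp
  hence lim: "((\<lambda>\<rho>::real. (\<Sum>A\<in>?S. \<rho> ^ card A / \<rho> ^ a * real (card (?X A)))
       / (\<Sum>A\<in>?S. \<rho> ^ card A / \<rho> ^ a)) \<longlongrightarrow> real a) at_top"
    using mpos by simp
  have ev: "eventually (\<lambda>\<rho>::real. (\<Sum>A\<in>?S. \<rho> ^ card A / \<rho> ^ a * real (card (?X A)))
       / (\<Sum>A\<in>?S. \<rho> ^ card A / \<rho> ^ a) = net_thr N E (\<lambda>_. \<rho>)) at_top"
    using eventually_gt_at_top[of 0]
  proof eventually_elim
    case (elim \<rho>)
    have "(\<Sum>A\<in>?S. \<rho> ^ card A / \<rho> ^ a * real (card (?X A)))
       = (\<Sum>A\<in>?S. \<rho> ^ card A * real (card (?X A))) / \<rho> ^ a"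
      by (simp add: sum_divide_distrib)
    moreover have "(\<Sum>A\<in>?S. \<rho> ^ card A / \<rho> ^ a) = (\<Sum>A\<in>?S. \<rho> ^ card A) / \<rho> ^ a"
      by (simp add: sum_divide_distrib)
    ultimately show ?case using elim by (simp add: net_eq)
  qed
  show ?thesis using tendsto_cong[OF ev] lim unfolding a_def by simp
qed

end
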